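(* For $n\ge 4$, the dom-stability of the path $P_n$ is $St_{dom}(P_n)=2$ if $n\equiv 3\pmod 4$, and $St_{dom}(P_n)=1$ otherwise.
   Context: A dominated coloring of a graph is a proper coloring in which every color class is dominated by at least one vertex, i.e. for each color class $C$ there is a vertex adjacent to every vertex of $C$; $\chi_{dom}(G)$ is the minimum number of colors in a dominated coloring. The dom-stability $St_{dom}(G)$ is the minimum number of vertices of $G$ whose removal changes the dominated chromatic number of $G$. *)

theory Defs
  imports Main
begin

text \<open>A (simple) graph is given by a vertex set V and a symmetric irreflexive
adjacency relation E. Removing a set S of vertices yields the induced subgraph
on V - S (same relation E, smaller vertex set).\<close>

text \<open>On graphs without isolated vertices this agrees with the open-neighbourhood
version, since in a proper colouring a class containing its dominator is a
singleton.\<close>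
definition dominates :: "'a set \<Rightarrow> ('a \<Rightarrow> 'a \<Rightarrow> bool) \<Rightarrow> 'a \<Rightarrow> 'a set \<Rightarrow> bool" where
  "dominates V E v C \<longleftrightarrow> v \<in> V \<and> (\<forall>u\<in>C. u = v \<or> E v u)"

definition proper_coloring :: "'a set \<Rightarrow> ('a \<Rightarrow> 'a \<Rightarrow> bool) \<Rightarrow> ('a \<Rightarrow> nat) \<Rightarrow> bool" where
  "proper_coloring V E c \<longleftrightarrow> (\<forall>u\<in>V. \<forall>v\<in>V. E u v \<longrightarrow> c u \<noteq> c v)"

definition dominated_coloring :: "'a set \<Rightarrow> ('a \<Rightarrow> 'a \<Rightarrow> bool) \<Rightarrow> ('a \<Rightarrow> nat) \<Rightarrow> bool" where
  "dominated_coloring V E c \<longleftrightarrow> proper_coloring V E c \<and>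
     (\<forall>i\<in>c ` V. \<exists>v. dominates V E v {u\<in>V. c u = i})"

definition chi_dom :: "'a set \<Rightarrow> ('a \<Rightarrow> 'a \<Rightarrow> bool) \<Rightarrow> nat" where
  "chi_dom V E = (LEAST k. \<exists>c. dominated_coloring V E c \<and> card (c ` V) = k)"

definition dom_stability :: "'a set \<Rightarrow> ('a \<Rightarrow> 'a \<Rightarrow> bool) \<Rightarrow> nat" where
  "dom_stability V E = (LEAST k. \<exists>S\<subseteq>V. card S = k \<and> chi_dom (V - S) E \<noteq> chi_dom V E)"

definition path_vertices :: "nat \<Rightarrow> nat set" where
  "path_vertices n = {..<n}"

definition path_adj :: "nat \<Rightarrow> nat \<Rightarrow> bool" where
  "path_adj i j \<longleftrightarrow> i + 1 = j \<or> j + 1 = i"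

end

theory Submission
  imports Defs
begin

definition hh :: "nat \<Rightarrow> nat" where
  "hh m = 2 * (m div 4) + min (m mod 4) 2"

definition ff :: "nat \<Rightarrow> nat" where
  "ff x = 2 * (x div 4) + x mod 4 mod 2"

lemma four_cases: "(r::nat) < 4 \<Longrightarrow> r = 0 \<or> r = 1 \<or> r = 2 \<or> r = 3" by auto

lemma qr: obtains q r where "x = 4*q + (r::nat)" "r < 4"
  using div_mult_mod_eq[of x 4] by (metis mod_less_divisor zero_less_numeral add.commute mult.commute)

lemma hh_char: "r < 4 \<Longrightarrow> hh (4*q+r) = 2*q + min r 2" by (simp add: hh_def)
lemma ff_char: "r < 4 \<Longrightarrow> ff (4*q+r) = 2*q + r mod 2" by (simp add: ff_def)

lemma ff_lt: assumes "x < m" shows "ff x < hh m"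
proof -
  obtain q r where x: "x = 4*q+r" "r<4" by (rule qr)
  obtain q' r' where m: "m = 4*q'+r'" "r'<4" by (rule qr)
  show ?thesis using assms x m four_cases[OF x(2)] four_cases[OF m(2)]
    by (auto simp: hh_char ff_char; presburger)
qed

lemma ff_suc: "ff x \<noteq> ff (Suc x)"
proof -
  obtain q r where x: "x = 4*q+r" "r<4" by (rule qr)
  show ?thesis using four_cases[OF x(2)] x
    by (auto simp: ff_char ff_def; presburger)
qed

lemma mod4_T: "u mod 4 < 2 \<Longrightarrow> (u + 2) mod 4 < (2::nat) \<Longrightarrow> False"
proof -
  obtain q r where x: "u = 4*q+r" "r<4" by (rule qr)
  assume "u mod 4 < 2" "(u + 2) mod 4 < (2::nat)"
  then show False using four_cases[OF x(2)] x by (auto; presburger)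
qed

definition D :: "nat \<Rightarrow> nat \<Rightarrow> nat" where
  "D m y = (if y mod 4 mod 2 = 0 then (if 4*(y div 4)+2 < m then 4*(y div 4)+1 else 4*(y div 4))
        else (if 4*(y div 4)+3 < m then 4*(y div 4)+2 else 4*(y div 4)+1))"

lemma D_prop: assumes "y < m" shows "D m y < m"
  and "z < m \<Longrightarrow> ff z = ff y \<Longrightarrow> z = D m y \<or> D m y + 1 = z \<or> z + 1 = D m y"
proof -
  obtain q r where x: "y = 4*q+r" "r<4" by (rule qr)
  show "D m y < m" using assms x four_cases[OF x(2)] unfolding D_def by auto
  assume z: "z < m" "ff z = ff y"
  obtain q' r' where x': "z = 4*q'+r'" "r'<4" by (rule qr)
  have "q' = q \<and> r' mod 2 = r mod 2" using z(2) x x' unfolding ff_char[OF x(2)]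
    by (auto simp: ff_def) presburger
  then show "z = D m y \<or> D m y + 1 = z \<or> z + 1 = D m y"
    using assms z x x' four_cases[OF x(2)] four_cases[OF x'(2)] unfolding D_def by auto
qed

lemma card_T: "card {x\<in>{..<m}. x mod 4 < (2::nat)} = hh m"
proof (induction m)
  case 0
  then show ?case by (simp add: hh_def)
next
  case (Suc m)
  have e: "{x\<in>{..<Suc m}. x mod 4 < (2::nat)} =
     (if m mod 4 < 2 then insert m {x\<in>{..<m}. x mod 4 < (2::nat)} else {x\<in>{..<m}. x mod 4 < (2::nat)})"
    by (auto simp: less_Suc_eq)
  have h: "hh (Suc m) = hh m + (if m mod 4 < 2 then 1 else 0)"
    unfolding hh_def using mod_less_divisor[of 4 m] by (auto simp: mod_Suc div_Suc)
  show ?case unfolding e h using Suc.IH by simp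
qed

lemma chi_le:
  assumes "dominated_coloring W E c"
  shows "chi_dom W E \<le> card (c ` W)"
  unfolding chi_dom_def using assms by (intro Least_le) blast

lemma chi_le':
  assumes "dominated_coloring W E c" "c ` W \<subseteq> {..<q}"
  shows "chi_dom W E \<le> q"
proof -
  have "card (c ` W) \<le> q" using card_mono[OF _ assms(2)] by simp
  then show ?thesis using chi_le[OF assms(1)] by simp
qed

lemma id_dom: "dominated_coloring W path_adj id"
  unfolding dominated_coloring_def proper_coloring_def dominates_def path_adj_def
  by auto

lemma chi_ge:
  assumes "\<And>c. dominated_coloring W path_adj c \<Longrightarrow> L \<le> card (c ` W)"
  shows "L \<le> chi_dom W path_adj"
proof -
  have ex: "\<exists>k c. dominated_coloring W path_adj c \<and> card (c ` W) = k"
    using id_dom by blast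
  from LeastI_ex[OF ex] obtain c where "dominated_coloring W path_adj c"
    "card (c ` W) = chi_dom W path_adj" unfolding chi_dom_def by blast
  then show ?thesis using assms by metis
qed

lemma lb_T:
  assumes "dominated_coloring W path_adj c" "T \<subseteq> W" "finite W"
    "\<forall>u\<in>T. \<forall>v\<in>T. u + 2 = v \<longrightarrow> u + 1 \<notin> W"
  shows "card T \<le> card (c ` W)"
proof -
  have "inj_on c T"
  proof (rule inj_onI, rule ccontr)
    fix u v assume uv: "u \<in> T" "v \<in> T" "c u = c v" "u \<noteq> v"
    have "c u \<in> c ` W" using uv assms(2) by auto
    then obtain d where d: "dominates W path_adj d {w\<in>W. c w = c u}"
      using assms(1) unfolding dominated_coloring_def by blast
    have uW: "u \<in> W" "v \<in> W" using uv assms(2) by auto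
    have du: "u = d \<or> path_adj d u" and dv: "v = d \<or> path_adj d v" and dW: "d \<in> W"
      using d uW uv(3) unfolding dominates_def by auto
    have np: "\<not> path_adj u v"
      using assms(1) uW uv(3) unfolding dominated_coloring_def proper_coloring_def by auto
    have "(u + 2 = v \<and> d = u+1) \<or> (v + 2 = u \<and> d = v+1)"
      using du dv np uv(4) unfolding path_adj_def by auto
    then show False using dW assms(4) uv(1,2) by auto
  qed
  then have "card T = card (c ` T)" by (simp add: card_image)
  also have "\<dots> \<le> card (c ` W)" using assms(2,3) by (intro card_mono) auto
  finally show ?thesis .
qed

lemma path_col: "\<exists>c. dominated_coloring {a..<a+m} path_adj c \<and> c ` {a..<a+m} \<subseteq> {..<hh m}"
proof -
  define c where "c v = ff (v - a)" for v
  have range: "c ` {a..<a+m} \<subseteq> {..<hh m}"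
    unfolding c_def using ff_lt by fastforce
  have proper: "proper_coloring {a..<a+m} path_adj c"
    unfolding proper_coloring_def path_adj_def c_def
  proof (intro ballI impI)
    fix u v assume uv: "u \<in> {a..<a+m}" "v \<in> {a..<a+m}" "u + 1 = v \<or> v + 1 = u"
    show "ff (u - a) \<noteq> ff (v - a)"
    proof (cases "u + 1 = v")
      case True
      then have "v - a = Suc (u - a)" using uv by auto
      then show ?thesis using ff_suc by simp
    next
      case False
      then have "u - a = Suc (v - a)" using uv by auto
      then show ?thesis using ff_suc by metis
    qed
  qed
  have dom: "\<exists>d. dominates {a..<a+m} path_adj d {u\<in>{a..<a+m}. c u = c x}"
    if x: "x \<in> {a..<a+m}" for x
  proof -
    define d where "d = a + D m (x - a)"
    have xm: "x - a < m" using x by auto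
    have "d \<in> {a..<a+m}" using D_prop(1)[OF xm] unfolding d_def by auto
    moreover have "\<forall>u\<in>{u\<in>{a..<a+m}. c u = c x}. u = d \<or> path_adj d u"
    proof
      fix u assume u: "u \<in> {u\<in>{a..<a+m}. c u = c x}"
      then have "u - a < m" "ff (u - a) = ff (x - a)" unfolding c_def by auto
      from D_prop(2)[OF xm this] show "u = d \<or> path_adj d u"
        using u unfolding d_def path_adj_def by auto
    qed
    ultimately show ?thesis unfolding dominates_def by blast
  qed
  have "dominated_coloring {a..<a+m} path_adj c"
    unfolding dominated_coloring_def using proper dom by blast
  then show ?thesis using range by blast
qed

lemma union_col:
  assumes "dominated_coloring A E c1" "c1 ` A \<subseteq> {..<p}"
    "dominated_coloring B E c2" "c2 ` B \<subseteq> {..<q}"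
  shows "\<exists>c. dominated_coloring (A \<union> B) E c \<and> c ` (A \<union> B) \<subseteq> {..<p+q}"
proof -
  define c where "c v = (if v \<in> A then c1 v else p + c2 v)" for v
  have range: "c ` (A \<union> B) \<subseteq> {..<p+q}" using assms(2,4) unfolding c_def by auto
  have p1: "proper_coloring A E c1" "proper_coloring B E c2"
    using assms(1,3) unfolding dominated_coloring_def by auto
  have lt: "\<And>v. v \<in> A \<Longrightarrow> c1 v < p" using assms(2) by auto
  have proper: "proper_coloring (A \<union> B) E c"
    unfolding proper_coloring_def
  proof (intro ballI impI)
    fix u v assume uv: "u \<in> A \<union> B" "v \<in> A \<union> B" "E u v"
    show "c u \<noteq> c v"
    proof (cases "u \<in> A"; cases "v \<in> A")
      assume "u \<in> A" "v \<in> A" then show ?thesis using p1(1) uv(3) unfolding c_def proper_coloring_def by auto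
    next
      assume "u \<in> A" "v \<notin> A" then show ?thesis using lt[of u] unfolding c_def by auto
    next
      assume "u \<notin> A" "v \<in> A" then show ?thesis using lt[of v] unfolding c_def by auto
    next
      assume "u \<notin> A" "v \<notin> A" then show ?thesis using p1(2) uv unfolding c_def proper_coloring_def by auto
    qed
  qed
  have dom: "\<exists>d. dominates (A \<union> B) E d {u\<in>A \<union> B. c u = c x}" if x: "x \<in> A \<union> B" for x
  proof (cases "x \<in> A")
    case True
    then obtain d where d: "dominates A E d {u\<in>A. c1 u = c1 x}"
      using assms(1) unfolding dominated_coloring_def by blast
    have "{u\<in>A \<union> B. c u = c x} = {u\<in>A. c1 u = c1 x}"
      using True lt[OF True] unfolding c_def by (auto split: if_splits)
    then show ?thesis using d unfolding dominates_def by auto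
  next
    case False
    then have xB: "x \<in> B" using x by auto
    then obtain d where d: "dominates B E d {u\<in>B. c2 u = c2 x}"
      using assms(3) unfolding dominated_coloring_def by blast
    have "{u\<in>A \<union> B. c u = c x} \<subseteq> {u\<in>B. c2 u = c2 x}"
    proof
      fix u assume u: "u \<in> {u\<in>A \<union> B. c u = c x}"
      have cx: "c x = p + c2 x" using False unfolding c_def by simp
      have "u \<notin> A"
      proof
        assume "u \<in> A"
        then have "c u < p" using lt unfolding c_def by simp
        then show False using u cx by simp
      qed
      then show "u \<in> {u\<in>B. c2 u = c2 x}" using u cx unfolding c_def by simp
    qed
    then show ?thesis using d unfolding dominates_def by blast
  qed
  have "dominated_coloring (A \<union> B) E c"
    unfolding dominated_coloring_def using proper dom by blast
  then show ?thesis using range by blast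
qed

lemma chi_path: "chi_dom {..<m} path_adj = hh m"
proof (rule antisym)
  obtain c where "dominated_coloring {0..<0+m} path_adj c" "c ` {0..<0+m} \<subseteq> {..<hh m}"
    using path_col by blast
  moreover have "{0..<0+m} = {..<m}" by auto
  ultimately show "chi_dom {..<m} path_adj \<le> hh m" using chi_le' by metis
next
  show "hh m \<le> chi_dom {..<m} path_adj"
  proof (rule chi_ge)
    fix c assume c: "dominated_coloring {..<m} path_adj c"
    have "card {x\<in>{..<m}. x mod 4 < (2::nat)} \<le> card (c ` {..<m})"
      by (rule lb_T[OF c]) (auto dest: mod4_T)
    then show "hh m \<le> card (c ` {..<m})" using card_T[of m] by simp
  qed
qed

lemma chi_gap:
  assumes "i < n"
  shows "chi_dom ({..<n} - {i}) path_adj = hh i + hh (n - 1 - i)"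
proof (rule antisym)
  obtain c1 where c1: "dominated_coloring {0..<0+i} path_adj c1" "c1 ` {0..<0+i} \<subseteq> {..<hh i}"
    using path_col by blast
  obtain c2 where c2: "dominated_coloring {i+1..<(i+1)+(n-1-i)} path_adj c2"
     "c2 ` {i+1..<(i+1)+(n-1-i)} \<subseteq> {..<hh (n-1-i)}"
    using path_col by blast
  obtain c where c: "dominated_coloring ({0..<0+i} \<union> {i+1..<(i+1)+(n-1-i)}) path_adj c"
    "c ` ({0..<0+i} \<union> {i+1..<(i+1)+(n-1-i)}) \<subseteq> {..<hh i + hh (n-1-i)}"
    using union_col[OF c1 c2] by blast
  have e: "{0..<0+i} \<union> {i+1..<(i+1)+(n-1-i)} = {..<n} - {i}" using assms by auto
  show "chi_dom ({..<n} - {i}) path_adj \<le> hh i + hh (n - 1 - i)"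
    using chi_le'[OF c(1) c(2)] unfolding e .
next
  show "hh i + hh (n - 1 - i) \<le> chi_dom ({..<n} - {i}) path_adj"
  proof (rule chi_ge)
    fix c assume c: "dominated_coloring ({..<n} - {i}) path_adj c"
    define T1 where "T1 = {x\<in>{..<i}. x mod 4 < (2::nat)}"
    define T2' where "T2' = {x\<in>{..<n-1-i}. x mod 4 < (2::nat)}"
    define T2 where "T2 = (\<lambda>x. i+1+x) ` T2'"
    have c1: "card T1 = hh i" unfolding T1_def by (rule card_T)
    have c2: "card T2 = hh (n-1-i)" unfolding T2_def
      using card_T[of "n-1-i"] by (subst card_image) (auto simp: inj_on_def T2'_def)
    have disj: "T1 \<inter> T2 = {}" unfolding T1_def T2_def by auto
    have fin: "finite T1" "finite T2" unfolding T1_def T2_def T2'_def by auto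
    have cu: "card (T1 \<union> T2) = hh i + hh (n-1-i)"
      using card_Un_disjoint[OF fin disj] c1 c2 by simp
    have "card (T1 \<union> T2) \<le> card (c ` ({..<n} - {i}))"
    proof (rule lb_T[OF c])
      show "T1 \<union> T2 \<subseteq> {..<n} - {i}" using assms unfolding T1_def T2_def T2'_def by auto
      show "finite ({..<n} - {i})" by simp
      show "\<forall>u\<in>T1 \<union> T2. \<forall>v\<in>T1 \<union> T2. u + 2 = v \<longrightarrow> u + 1 \<notin> {..<n} - {i}"
        unfolding T1_def T2_def T2'_def by (auto dest: mod4_T)
    qed
    then show "hh i + hh (n - 1 - i) \<le> card (c ` ({..<n} - {i}))" using cu by simp
  qed
qed

lemma chi_ends:
  assumes "n \<ge> 2"
  shows "chi_dom ({..<n} - {0, n-1}) path_adj \<le> hh (n - 2)"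
proof -
  obtain c where c: "dominated_coloring {1..<1+(n-2)} path_adj c" "c ` {1..<1+(n-2)} \<subseteq> {..<hh (n-2)}"
    using path_col by blast
  have e: "{1..<1+(n-2)} = {..<n} - {0, n-1}" using assms by auto
  show ?thesis using chi_le'[OF c(1) c(2)] unfolding e .
qed

lemma split3:
  assumes "i < 4*k+3" shows "hh i + hh (4*k+3-1-i) = 2*k+2"
proof -
  obtain p s where x: "i = 4*p+s" "s<4" by (rule qr)
  consider "s = 0" | "s = 1" | "s = 2" | "s = 3" using four_cases[OF x(2)] by blast
  then show ?thesis
  proof cases
    case 1
    then have "4*k+3-1-i = 4*(k-p)+2" "p \<le> k" using x assms by auto
    then show ?thesis using x 1 hh_char[of 2 "k-p"] hh_char[of 0 p] by simp
  next
    case 2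
    then have "4*k+3-1-i = 4*(k-p)+1" "p \<le> k" using x assms by auto
    then show ?thesis using x 2 hh_char[of 1 "k-p"] hh_char[of 1 p] by simp
  next
    case 3
    then have "4*k+3-1-i = 4*(k-p)+0" "p \<le> k" using x assms by auto
    then show ?thesis using x 3 hh_char[of 0 "k-p"] hh_char[of 2 p] by simp
  next
    case 4
    then have "4*k+3-1-i = 4*(k-p-1)+3" "p < k" using x assms by auto
    then show ?thesis using x 4 hh_char[of 3 "k-p-1"] hh_char[of 3 p] by simp
  qed
qed

theorem mainTheorem8:
  fixes n :: nat
  assumes "n \<ge> 4"
  shows "dom_stability (path_vertices n) path_adj = (if n mod 4 = 3 then 2 else 1)"
proof -
  let ?P = "\<lambda>k. \<exists>S\<subseteq>{..<n}. card S = k \<and> chi_dom ({..<n} - S) path_adj \<noteq> chi_dom {..<n} path_adj"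
  have ds: "dom_stability (path_vertices n) path_adj = (LEAST k. ?P k)"
    unfolding dom_stability_def path_vertices_def ..
  have not0: "\<not> ?P 0" by (metis Diff_empty card_0_eq finite_lessThan finite_subset)
  have single: "?P 1 \<longleftrightarrow> (\<exists>i<n. hh i + hh (n - 1 - i) \<noteq> hh n)"
  proof
    assume "?P 1"
    then obtain S where S: "S \<subseteq> {..<n}" "card S = 1"
      "chi_dom ({..<n} - S) path_adj \<noteq> chi_dom {..<n} path_adj" by blast
    then obtain i where "S = {i}" by (meson card_1_singletonE)
    then show "\<exists>i<n. hh i + hh (n - 1 - i) \<noteq> hh n" using S chi_gap chi_path by auto
  next
    assume "\<exists>i<n. hh i + hh (n - 1 - i) \<noteq> hh n"
    then obtain i where "i < n" "hh i + hh (n - 1 - i) \<noteq> hh n" by blast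
    then show "?P 1" using chi_gap chi_path by (intro exI[of _ "{i}"]) auto
  qed
  show ?thesis
  proof (cases "n mod 4 = 3")
    case True
    obtain k where k: "n = 4*k+3" using True by (metis div_mult_mod_eq add.commute mult.commute)
    have n1: "\<not> ?P 1" unfolding single
    proof
      assume "\<exists>i<n. hh i + hh (n - 1 - i) \<noteq> hh n"
      then obtain i where "i < n" "hh i + hh (n - 1 - i) \<noteq> hh n" by blast
      then show False using split3[of i k] k hh_char[of 3 k] by simp
    qed
    have p2: "?P 2"
    proof (intro exI[of _ "{0, n-1}"] conjI)
      show "{0, n-1} \<subseteq> {..<n}" using assms by auto
      show "card {0, n - 1} = 2" using assms by auto
      have "hh (n-2) < hh n" using k hh_char[of 3 k] hh_char[of 1 k] by simp
      then show "chi_dom ({..<n} - {0, n - 1}) path_adj \<noteq> chi_dom {..<n} path_adj"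
        using chi_ends[of n] assms chi_path[of n] by auto
    qed
    have "(LEAST k. ?P k) = 2"
    proof (rule Least_equality)
      show "?P 2" by (rule p2)
      fix y assume "?P y"
      then show "2 \<le> y"
      proof (rule contrapos_pp)
        assume "\<not> 2 \<le> y"
        then have "y = 0 \<or> y = 1" by auto
        then show "\<not> ?P y" using not0 n1 by blast
      qed
    qed
    then show ?thesis using ds True by simp
  next
    case False
    have p1: "?P 1" unfolding single
    proof (cases "n mod 4 = 0")
      case True
      then show "\<exists>i<n. hh i + hh (n - 1 - i) \<noteq> hh n" using assms
      proof -
        obtain k where k: "n = 4*k+0" using True by (metis div_mult_mod_eq add.commute mult.commute)
        then have k1: "k \<ge> 1" "n - 1 - 1 = 4*(k-1)+2" using assms by auto
        then show ?thesis using k hh_char[of 0 k] hh_char[of 2 "k-1"] hh_char[of 1 0] assms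
          by (intro exI[of _ 1]) auto
      qed
    next
      case F2: False
      then show "\<exists>i<n. hh i + hh (n - 1 - i) \<noteq> hh n" using assms False
      proof -
        have "n mod 4 = 1 \<or> n mod 4 = 2" using False F2 by auto
        then obtain k r where k: "n = 4*k+r" "r = 1 \<or> r = 2" by (metis div_mult_mod_eq add.commute mult.commute)
        have "hh (n-1) + hh (n - 1 - (n-1)) \<noteq> hh n"
          using k hh_char[of 0 k] hh_char[of 1 k] hh_char[of 2 k] hh_char[of 0 0] by auto
        then show ?thesis using assms by (intro exI[of _ "n-1"]) auto
      qed
    qed
    have "(LEAST k. ?P k) = 1"
    proof (rule Least_equality)
      show "?P 1" by (rule p1)
      fix y assume "?P y"
      then show "1 \<le> y"
      proof (rule contrapos_pp)
        assume "\<not> 1 \<le> y"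
        then have "y = 0" by auto
        then show "\<not> ?P y" using not0 by blast
      qed
    qed
    then show ?thesis using ds False by simp
  qed
qed

end
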